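(* Let $n,n'\in\mathbb{N}$, $\mathbb{K}$ a field, $R=\mathbb{K}[X_1,\ldots,X_n]$, $R'=\mathbb{K}[X_1,\ldots,X_{n'}]$, and let $J'\subsetneq I'\subset R'$ be monomial ideals. Let $\phi:\mathbb{N}^n\to\mathbb{N}^{n'}$ be a monotonic map, let $\Phi:R\to R'$ be the $\mathbb{K}$-linear map with $\Phi(X^a)=X^{\phi(a)}$ on monomials, and set $I:=\Phi^{-1}(I')$, $J:=\Phi^{-1}(J')$. Choose $g\in\mathbb{N}^n$ and $g'\in\mathbb{N}^{n'}$ such that every minimal generator of $I$ and $J$ divides $X^g$ and every minimal generator of $I'$ and $J'$ divides $X^{g'}$. Let $\ell\in\mathbb{Z}$ and assume $\phi$ changes the Stanley depth by $\ell$ with respect to $g$ and $g'$. Then (i) $I$ and $J$ are monomial ideals, and (ii) $\operatorname{sdepth} I/J \ge \operatorname{sdepth} I'/J' + \ell$.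
   Context: $\mathbb{N}^n$ carries the componentwise partial order; $[a,b]=\{c: a\le c\le b\}$; a map is monotonic if it preserves this order. A monotonic map $\phi:\mathbb{N}^n\to\mathbb{N}^{n'}$ changes the Stanley depth by $\ell\in\mathbb{Z}$ with respect to $g\in\mathbb{N}^n$ and $g'\in\mathbb{N}^{n'}$ if (1) $\phi(g)\le g'$, and (2) for every interval $[a',b']\subset[0,g']$, the set $\phi^{-1}([a',b'])\cap[0,g]$ is a finite disjoint union $\bigcup_i[a^i,b^i]$ of intervals with $\#\{j\in[n]: b^i_j=g_j\}\ge\#\{j\in[n']: b'_j=g'_j\}+\ell$ for all $i$. Stanley depth: with the fine multigrading, a Stanley decomposition of a finitely generated multigraded module $M$ is a finite family $(\mathbb{K}[Z_k], m_k)$ with $m_k$ homogeneous, $Z_k$ subsets of the variables, $m_k\mathbb{K}[Z_k]$ free over $\mathbb{K}[Z_k]$, and $M=\bigoplus_k m_k\mathbb{K}[Z_k]$ as multigraded $\mathbb{K}$-vector spaces; its depth is $\min_k|Z_k|$, and $\operatorname{sdepth}M$ is the maximal depth of a Stanley decomposition. *)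

theory Defs
  imports Main "HOL-Library.Extended_Real"
begin

text \<open>Exponent vectors in N^n are modelled as functions nat => nat vanishing
  outside {..<n}; the order is the pointwise (componentwise) order on functions.
  The monomial X^a is identified with its exponent vector a, and a monomial
  ideal of K[X_1..X_n] with the set of exponents of the monomials it contains
  (an upward closed subset of N^n).\<close>

definition Nn :: "nat \<Rightarrow> (nat \<Rightarrow> nat) set" where
  "Nn n = {a. \<forall>i\<ge>n. a i = 0}"

definition monomial_ideal :: "nat \<Rightarrow> (nat \<Rightarrow> nat) set \<Rightarrow> bool" where
  "monomial_ideal n I \<longleftrightarrow> I \<subseteq> Nn n \<and> (\<forall>a\<in>I. \<forall>b\<in>Nn n. a \<le> b \<longrightarrow> b \<in> I)"

definition min_gens :: "(nat \<Rightarrow> nat) set \<Rightarrow> (nat \<Rightarrow> nat) set" where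
  "min_gens I = {a \<in> I. \<forall>b\<in>I. b \<le> a \<longrightarrow> b = a}"

definition changes_sdepth ::
  "nat \<Rightarrow> nat \<Rightarrow> ((nat \<Rightarrow> nat) \<Rightarrow> (nat \<Rightarrow> nat)) \<Rightarrow> int \<Rightarrow> (nat \<Rightarrow> nat) \<Rightarrow> (nat \<Rightarrow> nat) \<Rightarrow> bool" where
  "changes_sdepth n n' \<phi> l g g' \<longleftrightarrow>
     \<phi> g \<le> g' \<and>
     (\<forall>a'\<in>Nn n'. \<forall>b'\<in>Nn n'. a' \<le> b' \<and> b' \<le> g' \<longrightarrow>
       (\<exists>P. finite P \<and>
            (\<forall>(a, b)\<in>P. a \<in> Nn n \<and> b \<in> Nn n \<and> a \<le> b) \<and>
            (\<forall>p\<in>P. \<forall>q\<in>P. p \<noteq> q \<longrightarrow> {fst p..snd p} \<inter> {fst q..snd q} = {}) \<and>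
            (\<Union>p\<in>P. {fst p..snd p}) = {c \<in> Nn n. c \<le> g \<and> \<phi> c \<in> {a'..b'}} \<and>
            (\<forall>(a, b)\<in>P. int (card {j. j < n \<and> b j = g j})
                          \<ge> int (card {j. j < n' \<and> b' j = g' j}) + l)))"

text \<open>Stanley space m K[Z], as the set of multidegrees of its monomials.\<close>
definition sspace :: "nat \<Rightarrow> (nat \<Rightarrow> nat) \<Rightarrow> nat set \<Rightarrow> (nat \<Rightarrow> nat) set" where
  "sspace n m Z = {(\<lambda>i. m i + b i) | b. b \<in> Nn n \<and> (\<forall>i. i \<notin> Z \<longrightarrow> b i = 0)}"

text \<open>Stanley decomposition of I/J (I, J monomial, J inside I) in the fine
  multigrading: homogeneous generators m_k with degree in I - J, the spaces
  m_k K[Z_k] free (no monomial falls into J), and I/J their direct sum.\<close>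
definition stanley_decomp ::
  "nat \<Rightarrow> (nat \<Rightarrow> nat) set \<Rightarrow> (nat \<Rightarrow> nat) set \<Rightarrow> ((nat \<Rightarrow> nat) \<times> nat set) set \<Rightarrow> bool" where
  "stanley_decomp n I J D \<longleftrightarrow> finite D \<and>
     (\<forall>(m, Z)\<in>D. m \<in> Nn n \<and> Z \<subseteq> {..<n} \<and> sspace n m Z \<subseteq> I - J) \<and>
     (\<forall>p\<in>D. \<forall>q\<in>D. p \<noteq> q \<longrightarrow> sspace n (fst p) (snd p) \<inter> sspace n (fst q) (snd q) = {}) \<and>
     (\<Union>p\<in>D. sspace n (fst p) (snd p)) = I - J"

definition sdepth_depth :: "((nat \<Rightarrow> nat) \<times> nat set) set \<Rightarrow> ereal" where
  "sdepth_depth D = (INF p\<in>D. ereal (real (card (snd p))))"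

text \<open>Stanley depth of I/J (the zero module gets depth +infinity via the empty decomposition).\<close>
definition sdepth :: "nat \<Rightarrow> (nat \<Rightarrow> nat) set \<Rightarrow> (nat \<Rightarrow> nat) set \<Rightarrow> ereal" where
  "sdepth n I J = (SUP D\<in>{D. stanley_decomp n I J D}. sdepth_depth D)"

end

theory Submission
  imports Defs
begin

lemma Nn_le: "b \<in> Nn n \<Longrightarrow> c \<le> b \<Longrightarrow> c \<in> Nn n"
  unfolding Nn_def le_fun_def by (simp, metis le_zero_eq)

lemma in_sspace_iff: "x \<in> sspace n c Z \<longleftrightarrow> (\<exists>y\<in>Nn n. (\<forall>i. i \<notin> Z \<longrightarrow> y i = 0) \<and> x = (\<lambda>i. c i + y i))"
  unfolding sspace_def by blast

lemma interval_sspace: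
  assumes "m \<le> x" "x \<in> Nn n" "\<forall>j. j \<notin> Z \<longrightarrow> x j \<le> m j"
  shows "x \<in> sspace n m Z"
proof -
  define y where "y = (\<lambda>i. x i - m i)"
  have "y \<in> Nn n" using assms(2) unfolding Nn_def y_def by auto
  moreover have "\<forall>i. i \<notin> Z \<longrightarrow> y i = 0" using assms(3) unfolding y_def by auto
  moreover have "x = (\<lambda>i. m i + y i)" using assms(1) unfolding y_def le_fun_def by auto
  ultimately show ?thesis unfolding in_sspace_iff by blast
qed

lemma sspace_le: "x \<in> sspace n m Z \<Longrightarrow> m \<le> x \<and> (\<forall>j. j \<notin> Z \<longrightarrow> x j = m j)"
  unfolding in_sspace_iff le_fun_def by auto

lemma finite_below:
  assumes "b \<in> Nn n"
  shows "finite {c. c \<le> b}"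
proof -
  let ?f = "\<lambda>c::nat\<Rightarrow>nat. map c [0..<n]"
  have inj: "inj_on ?f {c. c \<le> b}"
  proof (rule inj_onI)
    fix x y assume x: "x \<in> {c. c \<le> b}" and y: "y \<in> {c. c \<le> b}" and eq: "?f x = ?f y"
    have xn: "x \<in> Nn n" and yn: "y \<in> Nn n" using x y Nn_le assms by auto
    show "x = y"
    proof
      fix i show "x i = y i"
      proof (cases "i < n")
        case True then show ?thesis using eq by (simp add: map_eq_conv)
      next
        case False then show ?thesis using xn yn unfolding Nn_def by auto
      qed
    qed
  qed
  have "?f ` {c. c \<le> b} \<subseteq> {xs. set xs \<subseteq> {..(\<Sum>i<n. b i)} \<and> length xs = n}"
  proof
    fix xs assume "xs \<in> ?f ` {c. c \<le> b}"
    then obtain c where c: "c \<le> b" and xs: "xs = ?f c" by auto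
    have "\<forall>i<n. c i \<le> (\<Sum>i<n. b i)"
    proof (intro allI impI)
      fix i assume "i < n"
      then have "b i \<le> (\<Sum>i<n. b i)" by (intro member_le_sum) auto
      then show "c i \<le> (\<Sum>i<n. b i)" using c unfolding le_fun_def by (meson le_trans)
    qed
    then show "xs \<in> {xs. set xs \<subseteq> {..(\<Sum>i<n. b i)} \<and> length xs = n}" using xs by auto
  qed
  then have "finite (?f ` {c. c \<le> b})"
    using finite_lists_length_eq[of "{..(\<Sum>i<n. b i)}" n] finite_subset by blast
  then show ?thesis using inj by (rule finite_imageD)
qed

lemma exists_min_gen:
  assumes S: "S \<subseteq> Nn n" and x: "x \<in> S"
  shows "\<exists>m\<in>min_gens S. m \<le> x"
proof -
  obtain b where b: "b \<in> S \<and> b \<le> x" and bmin: "\<forall>c. c \<in> S \<and> c \<le> x \<longrightarrow> (\<Sum>i<n. b i) \<le> (\<Sum>i<n. c i)"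
    using ex_has_least_nat[of "\<lambda>c. c \<in> S \<and> c \<le> x" x "\<lambda>c. \<Sum>i<n. c i"] x by auto
  have "b \<in> min_gens S"
    unfolding min_gens_def
  proof (intro CollectI conjI ballI impI)
    show "b \<in> S" using b by auto
    fix c assume c: "c \<in> S" "c \<le> b"
    have "c \<le> x" using c b order_trans by blast
    then have s1: "(\<Sum>i<n. b i) \<le> (\<Sum>i<n. c i)" using bmin c by auto
    show "c = b"
    proof
      fix i
      show "c i = b i"
      proof (cases "i < n")
        case True
        show ?thesis
        proof (rule ccontr)
          assume "c i \<noteq> b i"
          then have "c i < b i" using c(2) unfolding le_fun_def by (meson le_neq_implies_less)
          then have "(\<Sum>i<n. c i) < (\<Sum>i<n. b i)"
            using True c(2) by (intro sum_strict_mono_ex1) (auto simp: le_fun_def)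
          then show False using s1 by simp
        qed
      next
        case False
        have "c \<in> Nn n" "b \<in> Nn n" using S c(1) b by blast+
        then show ?thesis using False unfolding Nn_def by simp
      qed
    qed
  qed
  then show ?thesis using b by blast
qed

lemma key:
  assumes mI: "monomial_ideal n I" and gI: "\<forall>a\<in>min_gens I. a \<le> g" and x: "x \<in> Nn n"
  shows "x \<in> I \<longleftrightarrow> inf x g \<in> I"
proof
  have ixn: "inf x g \<in> Nn n" using x Nn_le[of x n "inf x g"] by simp
  assume "x \<in> I"
  then obtain m where m: "m \<in> min_gens I" "m \<le> x"
    using exists_min_gen[of I n x] mI unfolding monomial_ideal_def by blast
  have "m \<in> I" using m unfolding min_gens_def by auto
  moreover have "m \<le> inf x g" using m gI by auto
  ultimately show "inf x g \<in> I" using mI ixn unfolding monomial_ideal_def by blast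
next
  assume "inf x g \<in> I"
  then show "x \<in> I" using mI x unfolding monomial_ideal_def by (meson inf.cobounded1)
qed


lemma step3:
  fixes Q :: "((nat \<Rightarrow> nat) \<times> (nat \<Rightarrow> nat)) set" and \<delta> :: ereal
  assumes mI: "monomial_ideal n I" and mJ: "monomial_ideal n J"
    and gI: "\<forall>a\<in>min_gens I. a \<le> g" and gJ: "\<forall>a\<in>min_gens J. a \<le> g"
    and fQ: "finite Q"
    and Qint: "\<forall>(a, b)\<in>Q. a \<in> Nn n \<and> b \<in> Nn n \<and> a \<le> b"
    and Qdisj: "\<forall>p\<in>Q. \<forall>q\<in>Q. p \<noteq> q \<longrightarrow> {fst p..snd p} \<inter> {fst q..snd q} = {}"
    and Qcov: "(\<Union>p\<in>Q. {fst p..snd p}) = {c \<in> Nn n. c \<le> g \<and> c \<in> I \<and> c \<notin> J}"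
    and Qd: "\<forall>(a, b)\<in>Q. \<delta> \<le> ereal (real (card {j. j < n \<and> b j = g j}))"
  shows "\<exists>D. stanley_decomp n I J D \<and> \<delta> \<le> sdepth_depth D"
proof -
  define W where "W b = {j. j < n \<and> b j = g j}" for b :: "nat \<Rightarrow> nat"
  define D where "D = (\<Union>(a, b)\<in>Q. (\<lambda>c. (c, W b)) ` {c \<in> {a..b}. \<forall>j\<in>W b. c j = a j})"
  have memD: "p \<in> D \<longleftrightarrow> (\<exists>a b. (a, b) \<in> Q \<and> fst p \<in> {a..b} \<and> (\<forall>j\<in>W b. fst p j = a j) \<and> snd p = W b)" for p
  proof
    assume "p \<in> D" then show "\<exists>a b. (a, b) \<in> Q \<and> fst p \<in> {a..b} \<and> (\<forall>j\<in>W b. fst p j = a j) \<and> snd p = W b"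
      unfolding D_def by auto blast
  next
    assume "\<exists>a b. (a, b) \<in> Q \<and> fst p \<in> {a..b} \<and> (\<forall>j\<in>W b. fst p j = a j) \<and> snd p = W b"
    then obtain a b where ab: "(a, b) \<in> Q" "fst p \<in> {a..b}" "\<forall>j\<in>W b. fst p j = a j" "snd p = W b" by blast
    have "p \<in> (\<lambda>c. (c, W b)) ` {c \<in> {a..b}. \<forall>j\<in>W b. c j = a j}"
      using ab(2,3,4) by (intro image_eqI[of _ _ "fst p"]) (auto simp: prod_eq_iff)
    then show "p \<in> D" unfolding D_def using ab(1) by (intro UN_I[of "(a, b)"]) auto
  qed
  have keyI: "x \<in> Nn n \<Longrightarrow> x \<in> I \<longleftrightarrow> inf x g \<in> I" for x using key[OF mI gI] by blast
  have keyJ: "x \<in> Nn n \<Longrightarrow> x \<in> J \<longleftrightarrow> inf x g \<in> J" for x using key[OF mJ gJ] by blast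
  have bg: "b \<le> g" if "(a, b) \<in> Q" for a b
  proof -
    have "b \<in> {a..b}" using that Qint by auto
    then have "b \<in> (\<Union>p\<in>Q. {fst p..snd p})" using that by force
    then show ?thesis using Qcov by auto
  qed
  have inQ: "x \<in> {a..b} \<Longrightarrow> (a, b) \<in> Q \<Longrightarrow> x \<in> Nn n \<and> x \<le> g \<and> x \<in> I \<and> x \<notin> J" for x a b
  proof -
    assume "x \<in> {a..b}" "(a, b) \<in> Q"
    then have "x \<in> (\<Union>p\<in>Q. {fst p..snd p})" by force
    then show ?thesis using Qcov by auto
  qed
  have finD: "finite D"
    unfolding D_def
  proof (rule finite_UN_I[OF fQ], clarify)
    fix a b assume ab: "(a, b) \<in> Q"
    have "finite {c. c \<le> b}" using ab Qint finite_below by blast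
    then have "finite {c \<in> {a..b}. \<forall>j\<in>W b. c j = a j}" by (rule finite_subset[rotated]) auto
    then show "finite ((\<lambda>c. (c, W b)) ` {c \<in> {a..b}. \<forall>j\<in>W b. c j = a j})" by simp
  qed
  have trunc: "inf x g \<in> {a..b} \<and> x \<in> Nn n"
    if ab: "(a, b) \<in> Q" and c: "c \<in> {a..b}" "\<forall>j\<in>W b. c j = a j" and x: "x \<in> sspace n c (W b)" for a b c x
  proof -
    obtain y where y: "y \<in> Nn n" "\<forall>i. i \<notin> W b \<longrightarrow> y i = 0" and xe: "x = (\<lambda>i. c i + y i)"
      using x unfolding in_sspace_iff by blast
    have bn: "b \<in> Nn n" using ab Qint by auto
    have cn: "c \<in> Nn n" using Nn_le[OF bn] c by auto
    have xn: "x \<in> Nn n" using cn y(1) xe unfolding Nn_def by auto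
    have bgg: "b \<le> g" using bg ab .
    have "a \<le> inf x g \<and> inf x g \<le> b"
      unfolding le_fun_def
    proof (intro conjI allI)
      fix j
      have cj: "a j \<le> c j" "c j \<le> b j" "b j \<le> g j" using c bgg by (auto simp: le_fun_def)
      show "a j \<le> inf x g j"
        using cj xe by auto
      show "inf x g j \<le> b j"
      proof (cases "j \<in> W b")
        case True then show ?thesis unfolding W_def by auto
      next
        case False then show ?thesis using cj xe y(2) by (auto intro: le_infI1)
      qed
    qed
    then show ?thesis using xn by auto
  qed
  have sub: "sspace n c Z \<subseteq> I - J" if p: "(c, Z) \<in> D" for c Z
  proof
    fix x assume x: "x \<in> sspace n c Z"
    obtain a b where ab: "(a, b) \<in> Q" "c \<in> {a..b}" "\<forall>j\<in>W b. c j = a j" "Z = W b"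
      using p memD[of "(c, Z)"] by auto
    have t: "inf x g \<in> {a..b}" "x \<in> Nn n" using trunc[OF ab(1,2,3)] x ab(4) by auto
    then have "inf x g \<in> I" "inf x g \<notin> J" using inQ[OF t(1) ab(1)] by auto
    then show "x \<in> I - J" using keyI[OF t(2)] keyJ[OF t(2)] by auto
  qed
  have props: "\<forall>(m, Z)\<in>D. m \<in> Nn n \<and> Z \<subseteq> {..<n} \<and> sspace n m Z \<subseteq> I - J"
  proof (clarify)
    fix c Z assume p: "(c, Z) \<in> D"
    obtain a b where ab: "(a, b) \<in> Q" "c \<in> {a..b}" "\<forall>j\<in>W b. c j = a j" "Z = W b"
      using p memD[of "(c, Z)"] by auto
    have bn: "b \<in> Nn n" using ab Qint by auto
    have "c \<in> Nn n" using Nn_le[OF bn] ab by auto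
    moreover have "Z \<subseteq> {..<n}" using ab(4) unfolding W_def by auto
    ultimately show "c \<in> Nn n \<and> Z \<subseteq> {..<n} \<and> sspace n c Z \<subseteq> I - J" using sub p by blast
  qed
  have disj: "\<forall>p\<in>D. \<forall>q\<in>D. p \<noteq> q \<longrightarrow> sspace n (fst p) (snd p) \<inter> sspace n (fst q) (snd q) = {}"
  proof (intro ballI impI)
    fix p q assume p: "p \<in> D" and q: "q \<in> D" and pq: "p \<noteq> q"
    obtain a b where ab: "(a, b) \<in> Q" "fst p \<in> {a..b}" "\<forall>j\<in>W b. fst p j = a j" "snd p = W b"
      using p memD by auto
    obtain a2 b2 where ab2: "(a2, b2) \<in> Q" "fst q \<in> {a2..b2}" "\<forall>j\<in>W b2. fst q j = a2 j" "snd q = W b2"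
      using q memD by auto
    show "sspace n (fst p) (snd p) \<inter> sspace n (fst q) (snd q) = {}"
    proof (rule ccontr)
      assume "sspace n (fst p) (snd p) \<inter> sspace n (fst q) (snd q) \<noteq> {}"
      then obtain x where x1: "x \<in> sspace n (fst p) (W b)" and x2: "x \<in> sspace n (fst q) (W b2)"
        using ab(4) ab2(4) by auto
      have t1: "inf x g \<in> {a..b}" using trunc[OF ab(1,2,3) x1] by auto
      have t2: "inf x g \<in> {a2..b2}" using trunc[OF ab2(1,2,3) x2] by auto
      have same: "(a, b) = (a2, b2)"
      proof (rule ccontr)
        assume "(a, b) \<noteq> (a2, b2)"
        then have "{a..b} \<inter> {a2..b2} = {}" using Qdisj ab(1) ab2(1) by fastforce
        then show False using t1 t2 by blast
      qed
      then have "fst p = fst q"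
      proof -
        have s1: "fst p \<le> x \<and> (\<forall>j. j \<notin> W b \<longrightarrow> x j = fst p j)" using sspace_le[OF x1] .
        have s2: "fst q \<le> x \<and> (\<forall>j. j \<notin> W b \<longrightarrow> x j = fst q j)" using sspace_le[OF x2] same by auto
        show ?thesis
        proof
          fix j show "fst p j = fst q j"
          proof (cases "j \<in> W b")
            case True then show ?thesis using ab(3) ab2(3) same by auto
          next
            case False then show ?thesis using s1 s2 by auto
          qed
        qed
      qed
      moreover have "snd p = snd q" using ab(4) ab2(4) same by auto
      ultimately show False using pq by (simp add: prod_eq_iff)
    qed
  qed
  have cov: "(\<Union>p\<in>D. sspace n (fst p) (snd p)) = I - J"
  proof
    show "(\<Union>p\<in>D. sspace n (fst p) (snd p)) \<subseteq> I - J" using sub by force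
  next
    show "I - J \<subseteq> (\<Union>p\<in>D. sspace n (fst p) (snd p))"
    proof
      fix x assume x: "x \<in> I - J"
      have xn: "x \<in> Nn n" using x mI unfolding monomial_ideal_def by auto
      have gn: "g \<in> Nn n \<or> True" by simp
      have ixn: "inf x g \<in> Nn n" using xn Nn_le[of x n "inf x g"] by simp
      have "inf x g \<in> I" "inf x g \<notin> J" using x keyI[OF xn] keyJ[OF xn] by auto
      then have "inf x g \<in> (\<Union>p\<in>Q. {fst p..snd p})" using Qcov ixn by auto
      then obtain a b where ab: "(a, b) \<in> Q" "inf x g \<in> {a..b}" by auto
      have bn: "b \<in> Nn n" and an: "a \<in> Nn n" and ale: "a \<le> b" using ab Qint by auto
      have bgg: "b \<le> g" using bg ab(1) .
      define c where "c = (\<lambda>j. if j \<in> W b then a j else x j)"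
      define y where "y = (\<lambda>j. if j \<in> W b then x j - a j else 0)"
      have pw: "a j \<le> min (x j) (g j)" "min (x j) (g j) \<le> b j" "b j \<le> g j" for j
        using ab(2) bgg by (auto simp: le_fun_def inf_nat_def)
      have notW: "a j \<le> x j \<and> x j \<le> b j" if "j \<notin> W b" for j
      proof (cases "j < n")
        case True
        then have "b j \<noteq> g j" using that unfolding W_def by auto
        then have "b j < g j" using pw(3)[of j] by auto
        then have "min (x j) (g j) = x j" using pw(2)[of j] by auto
        then show ?thesis using pw(1,2)[of j] by auto
      next
        case False then show ?thesis using xn an bn unfolding Nn_def by auto
      qed
      have cab: "c \<in> {a..b}" unfolding c_def le_fun_def atLeastAtMost_iff
        using notW ale by (auto simp: le_fun_def)
      have cW: "\<forall>j\<in>W b. c j = a j" unfolding c_def by auto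
      have "(c, W b) \<in> D" using memD[of "(c, W b)"] ab(1) cab cW by auto
      moreover have "x \<in> sspace n c (W b)"
        unfolding in_sspace_iff
      proof (intro bexI conjI allI impI)
        show "y \<in> Nn n" unfolding y_def Nn_def W_def by auto
        show "y i = 0" if "i \<notin> W b" for i using that unfolding y_def by auto
        show "x = (\<lambda>i. c i + y i)"
        proof
          fix i show "x i = c i + y i"
            using pw(1)[of i] unfolding c_def y_def by auto
        qed
      qed
      ultimately show "x \<in> (\<Union>p\<in>D. sspace n (fst p) (snd p))" by force
    qed
  qed
  have sd: "stanley_decomp n I J D" unfolding stanley_decomp_def using finD props disj cov by blast
  have "\<delta> \<le> sdepth_depth D"
    unfolding sdepth_depth_def
  proof (rule INF_greatest)
    fix p assume "p \<in> D"
    then obtain a b where ab: "(a, b) \<in> Q" "snd p = W b" using memD by auto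
    then show "\<delta> \<le> ereal (real (card (snd p)))" using Qd unfolding W_def by auto
  qed
  then show ?thesis using sd by blast
qed


lemma step2:
  fixes \<phi> :: "(nat \<Rightarrow> nat) \<Rightarrow> (nat \<Rightarrow> nat)"
  assumes phi: "\<phi> ` Nn n \<subseteq> Nn n'" and mono: "mono_on (Nn n) \<phi>"
    and g: "g \<in> Nn n" and cs: "changes_sdepth n n' \<phi> l g g'"
    and SD: "stanley_decomp n' I' J' D'"
  shows "\<exists>Q. finite Q \<and> (\<forall>(a, b)\<in>Q. a \<in> Nn n \<and> b \<in> Nn n \<and> a \<le> b)
    \<and> (\<forall>p\<in>Q. \<forall>q\<in>Q. p \<noteq> q \<longrightarrow> {fst p..snd p} \<inter> {fst q..snd q} = {})
    \<and> (\<Union>p\<in>Q. {fst p..snd p}) = {c \<in> Nn n. c \<le> g \<and> \<phi> c \<in> I' \<and> \<phi> c \<notin> J'}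
    \<and> (\<forall>(a, b)\<in>Q. sdepth_depth D' + ereal (real_of_int l) \<le> ereal (real (card {j. j < n \<and> b j = g j})))"
proof -
  define e where "e m Z = (\<lambda>j. if j \<in> Z then g' j else m j)" for m :: "nat \<Rightarrow> nat" and Z :: "nat set"
  define F where "F = {p \<in> D'. fst p \<le> g'}"
  have finD': "finite D'" and Dp: "\<forall>(m, Z)\<in>D'. m \<in> Nn n' \<and> Z \<subseteq> {..<n'} \<and> sspace n' m Z \<subseteq> I' - J'"
    and Ddisj: "\<forall>p\<in>D'. \<forall>q\<in>D'. p \<noteq> q \<longrightarrow> sspace n' (fst p) (snd p) \<inter> sspace n' (fst q) (snd q) = {}"
    and Dcov: "(\<Union>p\<in>D'. sspace n' (fst p) (snd p)) = I' - J'"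
    using SD unfolding stanley_decomp_def by auto
  have Dp': "fst p \<in> Nn n' \<and> snd p \<subseteq> {..<n'} \<and> sspace n' (fst p) (snd p) \<subseteq> I' - J'" if "p \<in> D'" for p
    using bspec[OF Dp that] by (simp add: split_beta)
  have eN: "fst p \<in> Nn n' \<and> e (fst p) (snd p) \<in> Nn n' \<and> fst p \<le> e (fst p) (snd p) \<and> e (fst p) (snd p) \<le> g'"
    if "p \<in> F" for p
  proof -
    have p: "p \<in> D'" "fst p \<le> g'" using that unfolding F_def by auto
    have m: "fst p \<in> Nn n'" "snd p \<subseteq> {..<n'}" using Dp'[OF p(1)] by auto
    have "e (fst p) (snd p) \<in> Nn n'" using m unfolding e_def Nn_def by auto
    moreover have "fst p \<le> e (fst p) (snd p)" using p(2) unfolding e_def le_fun_def by auto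
    moreover have "e (fst p) (snd p) \<le> g'" using p(2) unfolding e_def le_fun_def by auto
    ultimately show ?thesis using m by auto
  qed
  have phig: "\<phi> g \<le> g'" using cs unfolding changes_sdepth_def by auto
  define good where "good p P \<longleftrightarrow> finite P \<and>
            (\<forall>(a, b)\<in>P. a \<in> Nn n \<and> b \<in> Nn n \<and> a \<le> b) \<and>
            (\<forall>x\<in>P. \<forall>y\<in>P. x \<noteq> y \<longrightarrow> {fst x..snd x} \<inter> {fst y..snd y} = {}) \<and>
            (\<Union>x\<in>P. {fst x..snd x}) = {c \<in> Nn n. c \<le> g \<and> \<phi> c \<in> {fst p..e (fst p) (snd p)}} \<and>
            (\<forall>(a, b)\<in>P. int (card {j. j < n \<and> b j = g j})
                          \<ge> int (card {j. j < n' \<and> e (fst p) (snd p) j = g' j}) + l)" for p P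
  have "\<forall>p\<in>F. \<exists>P. good p P"
  proof
    fix p assume "p \<in> F"
    then have "fst p \<in> Nn n'" "e (fst p) (snd p) \<in> Nn n'" "fst p \<le> e (fst p) (snd p) \<and> e (fst p) (snd p) \<le> g'"
      using eN by auto
    then show "\<exists>P. good p P" using cs unfolding changes_sdepth_def good_def by blast
  qed
  then obtain PP where PP: "\<forall>p\<in>F. good p (PP p)" by (metis bchoice)
  define Q where "Q = (\<Union>p\<in>F. PP p)"
  have finF: "finite F" using finD' unfolding F_def by auto
  have A1: "p \<in> F \<and> c \<in> {fst p..e (fst p) (snd p)}" if "p \<in> D'" "c \<in> sspace n' (fst p) (snd p)" "c \<le> g'" for p c
  proof -
    have s: "fst p \<le> c" "\<forall>j. j \<notin> snd p \<longrightarrow> c j = fst p j" using sspace_le[OF that(2)] by auto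
    have "fst p \<le> g'" using s(1) that(3) by (rule order_trans)
    then have "p \<in> F" using that(1) unfolding F_def by auto
    moreover have "c \<le> e (fst p) (snd p)" using s(2) that(3) unfolding e_def le_fun_def by auto
    ultimately show ?thesis using s(1) by auto
  qed
  have A2: "y \<in> sspace n' (fst p) (snd p)" if "p \<in> F" "y \<in> {fst p..e (fst p) (snd p)}" for p y
  proof (rule interval_sspace)
    show "fst p \<le> y" using that by auto
    show "y \<in> Nn n'" using eN[OF that(1)] Nn_le that(2) by auto
    show "\<forall>j. j \<notin> snd p \<longrightarrow> y j \<le> fst p j"
    proof (intro allI impI)
      fix j assume j: "j \<notin> snd p"
      have "y \<le> e (fst p) (snd p)" using that(2) by auto
      then have "y j \<le> e (fst p) (snd p) j" by (rule le_funD)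
      then show "y j \<le> fst p j" using j unfolding e_def by simp
    qed
  qed
  have FD: "F \<subseteq> D'" unfolding F_def by auto
  have phiN: "\<phi> c \<in> Nn n' \<and> \<phi> c \<le> g'" if "c \<in> Nn n" "c \<le> g" for c
  proof -
    have "\<phi> c \<le> \<phi> g" using mono_onD[OF mono that(1) g that(2)] .
    then show ?thesis using phig phi that(1) by auto
  qed
  have cov: "(\<Union>p\<in>Q. {fst p..snd p}) = {c \<in> Nn n. c \<le> g \<and> \<phi> c \<in> I' \<and> \<phi> c \<notin> J'}"
  proof -
    have "(\<Union>p\<in>Q. {fst p..snd p}) = (\<Union>p\<in>F. \<Union>x\<in>PP p. {fst x..snd x})" unfolding Q_def by auto
    also have "\<dots> = (\<Union>p\<in>F. {c \<in> Nn n. c \<le> g \<and> \<phi> c \<in> {fst p..e (fst p) (snd p)}})"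
      using PP unfolding good_def by auto
    also have "\<dots> = {c \<in> Nn n. c \<le> g \<and> \<phi> c \<in> I' \<and> \<phi> c \<notin> J'}"
    proof
      show "(\<Union>p\<in>F. {c \<in> Nn n. c \<le> g \<and> \<phi> c \<in> {fst p..e (fst p) (snd p)}}) \<subseteq> {c \<in> Nn n. c \<le> g \<and> \<phi> c \<in> I' \<and> \<phi> c \<notin> J'}"
      proof
        fix c assume "c \<in> (\<Union>p\<in>F. {c \<in> Nn n. c \<le> g \<and> \<phi> c \<in> {fst p..e (fst p) (snd p)}})"
        then obtain p where pc: "p \<in> F" "c \<in> Nn n" "c \<le> g" "\<phi> c \<in> {fst p..e (fst p) (snd p)}" by auto
        then have "\<phi> c \<in> sspace n' (fst p) (snd p)" "p \<in> D'" using A2 FD by auto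
        then have "\<phi> c \<in> I' - J'" using Dp' by blast
        then show "c \<in> {c \<in> Nn n. c \<le> g \<and> \<phi> c \<in> I' \<and> \<phi> c \<notin> J'}" using pc by auto
      qed
    next
      show "{c \<in> Nn n. c \<le> g \<and> \<phi> c \<in> I' \<and> \<phi> c \<notin> J'} \<subseteq> (\<Union>p\<in>F. {c \<in> Nn n. c \<le> g \<and> \<phi> c \<in> {fst p..e (fst p) (snd p)}})"
      proof
        fix c assume "c \<in> {c \<in> Nn n. c \<le> g \<and> \<phi> c \<in> I' \<and> \<phi> c \<notin> J'}"
        then have c: "c \<in> Nn n" "c \<le> g" "\<phi> c \<in> I'" "\<phi> c \<notin> J'" by auto
        then have "\<phi> c \<in> (\<Union>p\<in>D'. sspace n' (fst p) (snd p))" using Dcov by auto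
        then obtain p where p: "p \<in> D'" "\<phi> c \<in> sspace n' (fst p) (snd p)" by auto
        have "p \<in> F \<and> \<phi> c \<in> {fst p..e (fst p) (snd p)}" using A1[OF p] phiN[OF c(1,2)] by auto
        then show "c \<in> (\<Union>p\<in>F. {c \<in> Nn n. c \<le> g \<and> \<phi> c \<in> {fst p..e (fst p) (snd p)}})" using c by auto
      qed
    qed
    finally show ?thesis .
  qed
  have disj: "\<forall>x\<in>Q. \<forall>y\<in>Q. x \<noteq> y \<longrightarrow> {fst x..snd x} \<inter> {fst y..snd y} = {}"
  proof (intro ballI impI)
    fix x y assume x: "x \<in> Q" and y: "y \<in> Q" and xy: "x \<noteq> y"
    obtain p where p: "p \<in> F" "x \<in> PP p" using x unfolding Q_def by auto
    obtain q where q: "q \<in> F" "y \<in> PP q" using y unfolding Q_def by auto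
    show "{fst x..snd x} \<inter> {fst y..snd y} = {}"
    proof (cases "p = q")
      case True
      then show ?thesis using PP p q xy unfolding good_def by blast
    next
      case False
      show ?thesis
      proof (rule ccontr)
        assume "{fst x..snd x} \<inter> {fst y..snd y} \<noteq> {}"
        then obtain c where c1: "c \<in> {fst x..snd x}" and c2: "c \<in> {fst y..snd y}" by blast
        have "c \<in> (\<Union>z\<in>PP p. {fst z..snd z})" using c1 p(2) by auto
        then have "\<phi> c \<in> {fst p..e (fst p) (snd p)}" using PP p(1) unfolding good_def by auto
        then have s1: "\<phi> c \<in> sspace n' (fst p) (snd p)" using A2 p(1) by auto
        have "c \<in> (\<Union>z\<in>PP q. {fst z..snd z})" using c2 q(2) by auto
        then have "\<phi> c \<in> {fst q..e (fst q) (snd q)}" using PP q(1) unfolding good_def by auto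
        then have s2: "\<phi> c \<in> sspace n' (fst q) (snd q)" using A2 q(1) by auto
        show False using Ddisj FD p(1) q(1) False s1 s2 by blast
      qed
    qed
  qed
  have finQ: "finite Q" unfolding Q_def using finF PP unfolding good_def by auto
  have ints: "\<forall>(a, b)\<in>Q. a \<in> Nn n \<and> b \<in> Nn n \<and> a \<le> b" unfolding Q_def using PP unfolding good_def by fast
  have dep: "sdepth_depth D' + ereal (real_of_int l) \<le> ereal (real (card {j. j < n \<and> b j = g j}))"
    if ab: "(a, b) \<in> Q" for a b
  proof -
    obtain p where p: "p \<in> F" "(a, b) \<in> PP p" using ab unfolding Q_def by auto
    have c1: "int (card {j. j < n \<and> b j = g j}) \<ge> int (card {j. j < n' \<and> e (fst p) (snd p) j = g' j}) + l"
      using PP p unfolding good_def by fast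
    have "snd p \<subseteq> {j. j < n' \<and> e (fst p) (snd p) j = g' j}"
      using Dp'[of p] FD p(1) unfolding e_def by auto
    then have c2: "card (snd p) \<le> card {j. j < n' \<and> e (fst p) (snd p) j = g' j}"
      by (rule card_mono[rotated]) auto
    have c3: "sdepth_depth D' \<le> ereal (real (card (snd p)))"
      unfolding sdepth_depth_def using FD p(1) by (intro INF_lower) auto
    have "sdepth_depth D' + ereal (real_of_int l) \<le> ereal (real (card (snd p))) + ereal (real_of_int l)"
      using c3 by (rule add_right_mono)
    also have "\<dots> = ereal (real_of_int (int (card (snd p)) + l))" by simp
    also have "\<dots> \<le> ereal (real (card {j. j < n \<and> b j = g j}))"
    proof -
      have "int (card (snd p)) + l \<le> int (card {j. j < n \<and> b j = g j})" using c1 c2 by linarith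
      then have "real_of_int (int (card (snd p)) + l) \<le> real_of_int (int (card {j. j < n \<and> b j = g j}))"
        by (rule of_int_le_iff[THEN iffD2])
      then show ?thesis by simp
    qed
    finally show ?thesis .
  qed
  have dep': "\<forall>(a, b)\<in>Q. sdepth_depth D' + ereal (real_of_int l) \<le> ereal (real (card {j. j < n \<and> b j = g j}))"
    using dep by blast
  show ?thesis by (intro exI[of _ Q] conjI finQ ints disj cov dep')
qed


theorem proposition3p3:
  fixes n n' :: nat
    and \<phi> :: "(nat \<Rightarrow> nat) \<Rightarrow> (nat \<Rightarrow> nat)"
    and I' J' :: "(nat \<Rightarrow> nat) set"
    and g g' :: "nat \<Rightarrow> nat"
    and l :: int
  assumes "monomial_ideal n' I'" and "monomial_ideal n' J'" and "J' \<subset> I'"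
    and "\<phi> ` Nn n \<subseteq> Nn n'" and "mono_on (Nn n) \<phi>"
    and "g \<in> Nn n" and "g' \<in> Nn n'"
    and "\<forall>a\<in>min_gens {a \<in> Nn n. \<phi> a \<in> I'}. a \<le> g"
    and "\<forall>a\<in>min_gens {a \<in> Nn n. \<phi> a \<in> J'}. a \<le> g"
    and "\<forall>a\<in>min_gens I'. a \<le> g'"
    and "\<forall>a\<in>min_gens J'. a \<le> g'"
    and "changes_sdepth n n' \<phi> l g g'"
  shows "monomial_ideal n {a \<in> Nn n. \<phi> a \<in> I'} \<and> monomial_ideal n {a \<in> Nn n. \<phi> a \<in> J'} \<and>
         sdepth n {a \<in> Nn n. \<phi> a \<in> I'} {a \<in> Nn n. \<phi> a \<in> J'} \<ge> sdepth n' I' J' + ereal (real_of_int l)"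
proof -
  let ?I = "{a \<in> Nn n. \<phi> a \<in> I'}"
  let ?J = "{a \<in> Nn n. \<phi> a \<in> J'}"
  have pull: "monomial_ideal n {a \<in> Nn n. \<phi> a \<in> K}" if K: "monomial_ideal n' K" for K
    unfolding monomial_ideal_def
  proof (intro conjI ballI impI)
    show "{a \<in> Nn n. \<phi> a \<in> K} \<subseteq> Nn n" by auto
    fix a b assume a: "a \<in> {a \<in> Nn n. \<phi> a \<in> K}" and b: "b \<in> Nn n" and ab: "a \<le> b"
    have "\<phi> a \<le> \<phi> b" using mono_onD[OF assms(5)] a b ab by auto
    moreover have "\<phi> b \<in> Nn n'" using assms(4) b by auto
    ultimately show "b \<in> {a \<in> Nn n. \<phi> a \<in> K}" using a b K unfolding monomial_ideal_def by blast
  qed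
  have mI: "monomial_ideal n ?I" using pull[OF assms(1)] .
  have mJ: "monomial_ideal n ?J" using pull[OF assms(2)] .
  have bound: "sdepth_depth D' + ereal (real_of_int l) \<le> sdepth n ?I ?J" if SD: "stanley_decomp n' I' J' D'" for D'
  proof -
    obtain Q where fQ: "finite Q" and Qint: "\<forall>(a, b)\<in>Q. a \<in> Nn n \<and> b \<in> Nn n \<and> a \<le> b"
      and Qdisj: "\<forall>p\<in>Q. \<forall>q\<in>Q. p \<noteq> q \<longrightarrow> {fst p..snd p} \<inter> {fst q..snd q} = {}"
      and Qcov: "(\<Union>p\<in>Q. {fst p..snd p}) = {c \<in> Nn n. c \<le> g \<and> \<phi> c \<in> I' \<and> \<phi> c \<notin> J'}"
      and Qd: "\<forall>(a, b)\<in>Q. sdepth_depth D' + ereal (real_of_int l) \<le> ereal (real (card {j. j < n \<and> b j = g j}))"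
      using step2[OF assms(4) assms(5) assms(6) assms(12) SD]
      apply (elim exE conjE) apply (rule that) apply assumption+ done
    have Qcov': "(\<Union>p\<in>Q. {fst p..snd p}) = {c \<in> Nn n. c \<le> g \<and> c \<in> ?I \<and> c \<notin> ?J}"
      using Qcov by auto
    obtain D where D: "stanley_decomp n ?I ?J D" "sdepth_depth D' + ereal (real_of_int l) \<le> sdepth_depth D"
      using step3[OF mI mJ assms(8) assms(9) fQ Qint Qdisj Qcov' Qd]
      apply (elim exE conjE) apply (rule that) apply assumption+ done
    then show ?thesis unfolding sdepth_def by (intro SUP_upper2[of D]) auto
  qed
  have "sdepth n' I' J' + ereal (real_of_int l) \<le> sdepth n ?I ?J"
  proof (cases "{D'. stanley_decomp n' I' J' D'} = {}")
    case True
    then have "sdepth n' I' J' = -\<infinity>" unfolding sdepth_def by (simp only: image_empty Sup_empty bot_ereal_def)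
    then show ?thesis by simp
  next
    case False
    have "sdepth n' I' J' + ereal (real_of_int l) = (SUP D'\<in>{D'. stanley_decomp n' I' J' D'}. sdepth_depth D' + ereal (real_of_int l))"
      unfolding sdepth_def by (rule SUP_ereal_add_left[symmetric]) (use False in auto)
    also have "\<dots> \<le> sdepth n ?I ?J" by (rule SUP_least) (use bound in auto)
    finally show ?thesis .
  qed
  then show ?thesis using mI mJ by blast
qed

end
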